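(* Let $A$ be a semilattice of groups. The set $\mathrm{iend}\,A$ of relatively invertible endomorphisms of $A$ is an (inverse) subsemigroup of the monoid $\mathrm{End}\,A$ (under composition), and it is isomorphic to $\mathcal I_{ui}(A)$.
   Context: A semilattice of groups is an inverse semigroup $A$ whose idempotents are central. An endomorphism $\varphi$ of $A$ is relatively invertible if there exist $\bar\varphi\in\mathrm{End}\,A$ and $e_\varphi\in E(A)$ such that $\bar\varphi(\varphi(a))=e_\varphi a$ and $\varphi(\bar\varphi(a))=\varphi(e_\varphi)a$ for all $a\in A$, $e_\varphi$ is the identity of $\bar\varphi(A)$ and $\varphi(e_\varphi)$ is the identity of $\varphi(A)$. $\mathcal I_{ui}(A)$ denotes the inverse semigroup of all isomorphisms between unital ideals of $A$ (ideals of the form $eA$, $e\in E(A)$), with the usual composition of partial bijections. *)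

theory Defs
  imports Main "HOL-Library.FuncSet"
begin

definition semigrp :: "'a set \<Rightarrow> ('a \<Rightarrow> 'a \<Rightarrow> 'a) \<Rightarrow> bool" where
  "semigrp S m \<longleftrightarrow> (\<forall>a\<in>S. \<forall>b\<in>S. m a b \<in> S) \<and>
     (\<forall>a\<in>S. \<forall>b\<in>S. \<forall>c\<in>S. m (m a b) c = m a (m b c))"

definition inverse_semigrp :: "'a set \<Rightarrow> ('a \<Rightarrow> 'a \<Rightarrow> 'a) \<Rightarrow> bool" where
  "inverse_semigrp S m \<longleftrightarrow> semigrp S m \<and>
     (\<forall>a\<in>S. \<exists>!b. b \<in> S \<and> m (m a b) a = a \<and> m (m b a) b = b)"

definition idems :: "'a set \<Rightarrow> ('a \<Rightarrow> 'a \<Rightarrow> 'a) \<Rightarrow> 'a set" where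
  "idems S m = {e \<in> S. m e e = e}"

definition semilattice_of_groups :: "'a set \<Rightarrow> ('a \<Rightarrow> 'a \<Rightarrow> 'a) \<Rightarrow> bool" where
  "semilattice_of_groups S m \<longleftrightarrow> inverse_semigrp S m \<and>
     (\<forall>e\<in>idems S m. \<forall>a\<in>S. m e a = m a e)"

text \<open>Endomorphisms, as extensional functions S \<rightarrow> S (undefined off S); composition
  is FuncSet's compose S, i.e. (compose S f g) a = f (g a).\<close>

definition endos :: "'a set \<Rightarrow> ('a \<Rightarrow> 'a \<Rightarrow> 'a) \<Rightarrow> ('a \<Rightarrow> 'a) set" where
  "endos S m = {f. f \<in> S \<rightarrow>\<^sub>E S \<and> (\<forall>a\<in>S. \<forall>b\<in>S. f (m a b) = m (f a) (f b))}"

definition is_identity_of :: "('a \<Rightarrow> 'a \<Rightarrow> 'a) \<Rightarrow> 'a \<Rightarrow> 'a set \<Rightarrow> bool" where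
  "is_identity_of m e T \<longleftrightarrow> e \<in> T \<and> (\<forall>t\<in>T. m e t = t \<and> m t e = t)"

definition rel_invertible :: "'a set \<Rightarrow> ('a \<Rightarrow> 'a \<Rightarrow> 'a) \<Rightarrow> ('a \<Rightarrow> 'a) \<Rightarrow> bool" where
  "rel_invertible S m f \<longleftrightarrow> f \<in> endos S m \<and>
     (\<exists>g\<in>endos S m. \<exists>e\<in>idems S m.
        (\<forall>a\<in>S. g (f a) = m e a) \<and> (\<forall>a\<in>S. f (g a) = m (f e) a) \<and>
        is_identity_of m e (g ` S) \<and> is_identity_of m (f e) (f ` S))"

definition iend :: "'a set \<Rightarrow> ('a \<Rightarrow> 'a \<Rightarrow> 'a) \<Rightarrow> ('a \<Rightarrow> 'a) set" where
  "iend S m = {f. rel_invertible S m f}"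

definition unital_ideal :: "'a set \<Rightarrow> ('a \<Rightarrow> 'a \<Rightarrow> 'a) \<Rightarrow> 'a \<Rightarrow> 'a set" where
  "unital_ideal S m e = (\<lambda>a. m e a) ` S"

definition Iui :: "'a set \<Rightarrow> ('a \<Rightarrow> 'a \<Rightarrow> 'a) \<Rightarrow> ('a \<Rightarrow> 'a option) set" where
  "Iui S m = {p. \<exists>e\<in>idems S m. \<exists>f\<in>idems S m.
      dom p = unital_ideal S m e \<and> ran p = unital_ideal S m f \<and> inj_on p (dom p) \<and>
      (\<forall>x\<in>dom p. \<forall>y\<in>dom p. p (m x y) = Some (m (the (p x)) (the (p y))))}"

end

theory Submission
  imports Defs
begin

locale slg =
  fixes S :: "'a set" and m :: "'a \<Rightarrow> 'a \<Rightarrow> 'a"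
  assumes slg: "semilattice_of_groups S m"
begin

lemma sg: "semigrp S m" using slg unfolding semilattice_of_groups_def inverse_semigrp_def by simp

lemma closed[simp,intro]: "a \<in> S \<Longrightarrow> b \<in> S \<Longrightarrow> m a b \<in> S"
  using sg unfolding semigrp_def by blast

lemma assoc[simp]: "a \<in> S \<Longrightarrow> b \<in> S \<Longrightarrow> c \<in> S \<Longrightarrow> m (m a b) c = m a (m b c)"
  using sg unfolding semigrp_def by blast

lemma central: "e \<in> idems S m \<Longrightarrow> a \<in> S \<Longrightarrow> m e a = m a e"
  using slg unfolding semilattice_of_groups_def by blast

lemma idemS[simp,intro]: "e \<in> idems S m \<Longrightarrow> e \<in> S"
  and idem_sq[simp]: "e \<in> idems S m \<Longrightarrow> m e e = e"
  by (auto simp: idems_def)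

lemma idem_left[simp]: "e \<in> idems S m \<Longrightarrow> a \<in> S \<Longrightarrow> m e (m e a) = m e a"
  using assoc[of e e a] by simp

lemma idem_comm: "e \<in> idems S m \<Longrightarrow> f \<in> idems S m \<Longrightarrow> m e f = m f e"
  using central[of e f] by blast

lemma idem_comm2: "e \<in> idems S m \<Longrightarrow> f \<in> idems S m \<Longrightarrow> a \<in> S \<Longrightarrow> m e (m f a) = m f (m e a)"
proof -
  assume e: "e \<in> idems S m" and f: "f \<in> idems S m" and a: "a \<in> S"
  have "m e (m f a) = m (m e f) a" using assoc[OF idemS[OF e] idemS[OF f] a] by simp
  also have "\<dots> = m (m f e) a" using idem_comm[OF e f] by (rule arg_cong)
  also have "\<dots> = m f (m e a)" using assoc[OF idemS[OF f] idemS[OF e] a] by simp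
  finally show ?thesis .
qed

lemma idems_mult[intro]: "e \<in> idems S m \<Longrightarrow> f \<in> idems S m \<Longrightarrow> m e f \<in> idems S m"
proof -
  assume e: "e \<in> idems S m" and f: "f \<in> idems S m"
  have "m (m e f) (m e f) = m e (m f (m e f))" using assoc[OF idemS[OF e] idemS[OF f] closed[OF idemS[OF e] idemS[OF f]]] by simp
  also have "m f (m e f) = m e (m f f)" by (rule idem_comm2[OF f e idemS[OF f]])
  also have "m e (m e (m f f)) = m e f" using idem_left[OF e idemS[OF f]] idem_sq[OF f] by simp
  finally show ?thesis using e f unfolding idems_def by blast
qed

lemma endoS[simp]: "f \<in> endos S m \<Longrightarrow> a \<in> S \<Longrightarrow> f a \<in> S"
  unfolding endos_def by (simp add: PiE_iff)
lemma endo_mult[simp]: "f \<in> endos S m \<Longrightarrow> a \<in> S \<Longrightarrow> b \<in> S \<Longrightarrow> f (m a b) = m (f a) (f b)"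
  unfolding endos_def by blast
lemma endo_ext: "f \<in> endos S m \<Longrightarrow> a \<notin> S \<Longrightarrow> f a = undefined"
  unfolding endos_def by (simp add: PiE_iff extensional_def)
lemma endo_idem[intro]: "f \<in> endos S m \<Longrightarrow> e \<in> idems S m \<Longrightarrow> f e \<in> idems S m"
proof -
  assume f: "f \<in> endos S m" and e: "e \<in> idems S m"
  have "m (f e) (f e) = f (m e e)" by (rule endo_mult[OF f idemS[OF e] idemS[OF e], symmetric])
  also have "\<dots> = f e" using idem_sq[OF e] by (rule arg_cong)
  finally show ?thesis using endoS[OF f idemS[OF e]] unfolding idems_def by blast
qed
lemma compose_endo[intro]: "f \<in> endos S m \<Longrightarrow> g \<in> endos S m \<Longrightarrow> compose S f g \<in> endos S m"
proof -
  assume f: "f \<in> endos S m" and g: "g \<in> endos S m"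
  have 1: "compose S f g \<in> S \<rightarrow>\<^sub>E S" unfolding compose_def using f g by (simp add: restrict_PiE_iff)
  have 2: "\<forall>a\<in>S. \<forall>b\<in>S. compose S f g (m a b) = m (compose S f g a) (compose S f g b)"
    using f g by (simp add: compose_eq)
  show ?thesis using 1 2 unfolding endos_def by blast
qed

definition RI where
  "RI f g e \<longleftrightarrow> f \<in> endos S m \<and> g \<in> endos S m \<and> e \<in> idems S m \<and>
     (\<forall>a\<in>S. g (f a) = m e a) \<and> (\<forall>a\<in>S. f (g a) = m (f e) a) \<and>
     is_identity_of m e (g ` S) \<and> is_identity_of m (f e) (f ` S)"

lemma rel_inv_RI: "rel_invertible S m f \<longleftrightarrow> (\<exists>g e. RI f g e)"
  unfolding rel_invertible_def RI_def by blast

lemma RID: assumes "RI f g e"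
  shows "f \<in> endos S m" "g \<in> endos S m" "e \<in> idems S m"
   "\<And>a. a \<in> S \<Longrightarrow> g (f a) = m e a" "\<And>a. a \<in> S \<Longrightarrow> f (g a) = m (f e) a"
   "is_identity_of m e (g ` S)" "is_identity_of m (f e) (f ` S)"
  using assms unfolding RI_def by auto

lemma is_idD: "is_identity_of m e T \<Longrightarrow> e \<in> T"
   "is_identity_of m e T \<Longrightarrow> t \<in> T \<Longrightarrow> m e t = t"
   "is_identity_of m e T \<Longrightarrow> t \<in> T \<Longrightarrow> m t e = t"
  unfolding is_identity_of_def by auto

lemma RI_unique: assumes A: "RI f g e" and B: "RI f g' e'" shows "e = e'"
proof -
  note a = RID[OF A] and b = RID[OF B]
  have S: "e \<in> S" "e' \<in> S" using a(3) b(3) by auto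
  have "f e = m (f e) (f e')" using is_idD(3)[OF b(7), of "f e"] S by simp
  also have "\<dots> = f e'" using is_idD(2)[OF a(7), of "f e'"] S by simp
  finally have fe: "f e = f e'" .
  have "e = g (f e)" using a(4)[OF S(1)] a(3) by simp
  also have "\<dots> = m e e'" using a(4)[OF S(2)] fe by simp
  finally have 1: "e = m e e'" .
  have "e' = g' (f e')" using b(4)[OF S(2)] b(3) by simp
  also have "\<dots> = m e' e" using b(4)[OF S(1)] fe by simp
  finally have "e' = m e' e" .
  with 1 show ?thesis using idem_comm[OF a(3) b(3)] by simp
qed


lemma RI_sym: assumes A: "RI f g e" shows "RI g f (f e)"
proof -
  note a = RID[OF A]
  have eS: "e \<in> S" using a(3) by simp
  have gfe: "g (f e) = e" using a(4)[OF eS] idem_sq[OF a(3)] by simp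
  show ?thesis unfolding RI_def using a gfe endo_idem[OF a(1) a(3)] by simp
qed

lemma RI_comp: assumes A: "RI f1 g1 e1" and B: "RI f2 g2 e2"
  shows "RI (compose S f1 f2) (compose S g2 g1) (m (g2 e1) e2)"
proof -
  note a = RID[OF A] and b = RID[OF B]
  define E where "E = m (g2 e1) e2"
  have e1S: "e1 \<in> S" and e2S: "e2 \<in> S" using a(3) b(3) by auto
  have g2e1: "g2 e1 \<in> idems S m" using endo_idem[OF b(2) a(3)] .
  have f2e2: "f2 e2 \<in> idems S m" using endo_idem[OF b(1) b(3)] .
  have f1e1: "f1 e1 \<in> idems S m" using endo_idem[OF a(1) a(3)] .
  have f1f2e2: "f1 (f2 e2) \<in> idems S m" using endo_idem[OF a(1) f2e2] .
  have Eid: "E \<in> idems S m" unfolding E_def using idems_mult[OF g2e1 b(3)] .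
  hence ES: "E \<in> S" by simp
  have c1: "compose S f1 f2 \<in> endos S m" using a(1) b(1) by blast
  have c2: "compose S g2 g1 \<in> endos S m" using a(2) b(2) by blast
  have i3: "compose S g2 g1 (compose S f1 f2 a) = m E a" if aS: "a \<in> S" for a
  proof -
    have "compose S g2 g1 (compose S f1 f2 a) = g2 (g1 (f1 (f2 a)))"
      using aS a(1) b(1) by (simp add: compose_eq)
    also have "\<dots> = g2 (m e1 (f2 a))" using a(4)[of "f2 a"] aS b(1) by simp
    also have "\<dots> = m (g2 e1) (g2 (f2 a))" using endo_mult[OF b(2) e1S, of "f2 a"] aS b(1) by simp
    also have "\<dots> = m (g2 e1) (m e2 a)" using b(4)[OF aS] by simp
    also have "\<dots> = m E a" unfolding E_def using g2e1 e2S aS by simp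
    finally show ?thesis .
  qed
  have f2g2e1: "f2 (g2 e1) = m (f2 e2) e1" using b(5)[OF e1S] .
  have FE: "compose S f1 f2 E = m (f1 e1) (f1 (f2 e2))"
  proof -
    have "compose S f1 f2 E = f1 (f2 E)" using ES by (simp add: compose_eq)
    also have "f2 E = m (m (f2 e2) e1) (f2 e2)" unfolding E_def
      using endo_mult[OF b(1) idemS[OF g2e1] e2S] f2g2e1 by simp
    also have "\<dots> = m (f2 e2) (m e1 (f2 e2))" using f2e2 e1S by simp
    also have "m e1 (f2 e2) = m (f2 e2) e1" using idem_comm[OF a(3) f2e2] .
    also have "m (f2 e2) (m (f2 e2) e1) = m e1 (f2 e2)" using idem_left[OF f2e2 e1S] idem_comm[OF a(3) f2e2] by simp
    also have "f1 (m e1 (f2 e2)) = m (f1 e1) (f1 (f2 e2))" using endo_mult[OF a(1) e1S] f2e2 by simp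
    finally show ?thesis .
  qed
  have i4: "compose S f1 f2 (compose S g2 g1 a) = m (compose S f1 f2 E) a" if aS: "a \<in> S" for a
  proof -
    have "compose S f1 f2 (compose S g2 g1 a) = f1 (f2 (g2 (g1 a)))"
      using aS a(2) b(2) by (simp add: compose_eq)
    also have "\<dots> = f1 (m (f2 e2) (g1 a))" using b(5)[of "g1 a"] aS a(2) by simp
    also have "\<dots> = m (f1 (f2 e2)) (f1 (g1 a))" using endo_mult[OF a(1), of "f2 e2" "g1 a"] aS a(2) f2e2 by simp
    also have "\<dots> = m (f1 (f2 e2)) (m (f1 e1) a)" using a(5)[OF aS] by simp
    also have "\<dots> = m (f1 e1) (m (f1 (f2 e2)) a)" using idem_comm2[OF f1f2e2 f1e1 aS] .
    also have "\<dots> = m (compose S f1 f2 E) a" unfolding FE using f1e1 f1f2e2 aS by simp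
    finally show ?thesis .
  qed
  have i5: "is_identity_of m E (compose S g2 g1 ` S)"
  proof -
    have "compose S g2 g1 (f1 (f2 e2)) = g2 (g1 (f1 (f2 e2)))"
      using e2S a(1) b(1) by (simp add: compose_eq)
    also have "\<dots> = g2 (m e1 (f2 e2))" using a(4)[of "f2 e2"] f2e2 by simp
    also have "\<dots> = m (g2 e1) (g2 (f2 e2))" using endo_mult[OF b(2) e1S, of "f2 e2"] f2e2 by simp
    also have "\<dots> = E" unfolding E_def using b(4)[OF e2S] b(3) by simp
    finally have "E \<in> compose S g2 g1 ` S" using e2S a(1) b(1)
      by (metis endoS image_eqI)
    moreover have "m E t = t \<and> m t E = t" if tS: "t \<in> compose S g2 g1 ` S" for t
    proof -
      obtain s where sS: "s \<in> S" and ts: "t = g2 (g1 s)" using tS by (auto simp: compose_eq)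
      have g1s: "g1 s \<in> S" using a(2) sS by simp
      have "m E t = m (g2 e1) (m e2 (g2 (g1 s)))" unfolding E_def ts using g2e1 e2S g1s b(2) by simp
      also have "m e2 (g2 (g1 s)) = g2 (g1 s)" using is_idD(2)[OF b(6)] g1s by simp
      also have "m (g2 e1) (g2 (g1 s)) = g2 (m e1 (g1 s))" using endo_mult[OF b(2) e1S g1s] by simp
      also have "m e1 (g1 s) = g1 s" using is_idD(2)[OF a(6)] sS by simp
      finally have 1: "m E t = t" using ts by simp
      moreover have "m t E = m E t" using central[OF Eid] tS c2 by (metis endoS imageE)
      ultimately show ?thesis by simp
    qed
    ultimately show ?thesis unfolding is_identity_of_def by blast
  qed
  have i6: "is_identity_of m (compose S f1 f2 E) (compose S f1 f2 ` S)"
  proof -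
    have "compose S f1 f2 E \<in> compose S f1 f2 ` S" using ES by simp
    moreover have "m (compose S f1 f2 E) t = t \<and> m t (compose S f1 f2 E) = t" if tS: "t \<in> compose S f1 f2 ` S" for t
    proof -
      obtain s where sS: "s \<in> S" and ts: "t = f1 (f2 s)" using tS by (auto simp: compose_eq)
      have f2s: "f2 s \<in> S" using b(1) sS by simp
      have tS': "t \<in> S" using ts a(1) f2s by simp
      have "m (compose S f1 f2 E) t = m (f1 e1) (m (f1 (f2 e2)) t)" unfolding FE using f1e1 f1f2e2 tS' by simp
      also have "m (f1 (f2 e2)) t = f1 (m (f2 e2) (f2 s))" unfolding ts using endo_mult[OF a(1) _ f2s] f2e2 by simp
      also have "m (f2 e2) (f2 s) = f2 s" using is_idD(2)[OF b(7)] sS by simp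
      also have "m (f1 e1) (f1 (f2 s)) = f1 (f2 s)" using is_idD(2)[OF a(7)] f2s by simp
      finally have 1: "m (compose S f1 f2 E) t = t" using ts by simp
      moreover have "m t (compose S f1 f2 E) = m (compose S f1 f2 E) t"
        using central[OF endo_idem[OF c1 Eid] tS'] by simp
      ultimately show ?thesis by simp
    qed
    ultimately show ?thesis unfolding is_identity_of_def by blast
  qed
  show ?thesis unfolding RI_def E_def[symmetric] using c1 c2 Eid i3 i4 i5 i6 by blast
qed


lemma RI_fe: assumes A: "RI f g e" and aS: "a \<in> S" shows "f (m e a) = f a"
proof -
  note r = RID[OF A]
  have "f (m e a) = m (f e) (f a)" using endo_mult[OF r(1) idemS[OF r(3)] aS] .
  also have "\<dots> = f a" using is_idD(2)[OF r(7)] aS by simp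
  finally show ?thesis .
qed

lemma RI_self: assumes A: "RI f g e" shows "compose S (compose S f g) f = f"
proof
  fix a
  note r = RID[OF A]
  show "compose S (compose S f g) f a = f a"
  proof (cases "a \<in> S")
    case True
    have "compose S (compose S f g) f a = f (g (f a))" using True r(1) by (simp add: compose_eq)
    also have "\<dots> = f (m e a)" using r(4)[OF True] by simp
    also have "\<dots> = f a" using RI_fe[OF A True] .
    finally show ?thesis .
  next
    case False thus ?thesis using endo_ext[OF r(1) False] by (simp add: compose_def)
  qed
qed

lemma RI_idem: assumes A: "RI f g e" and ff: "compose S f f = f" shows "f = restrict (m e) S"
proof -
  note r = RID[OF A]
  have ffa: "f (f a) = f a" if "a \<in> S" for a using fun_cong[OF ff, of a] that by (simp add: compose_eq)
  have eS: "e \<in> S" using r(3) by simp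
  have fe: "f e \<in> idems S m" using endo_idem[OF r(1) r(3)] .
  have 1: "m e (f a) = m e a" if aS: "a \<in> S" for a
    using r(4)[of "f a"] r(4)[OF aS] ffa[OF aS] r(1) aS by simp
  have "f (g e) = m (f e) e" using r(5)[OF eS] .
  also have "\<dots> = m e (f e)" using idem_comm[OF fe r(3)] .
  also have "\<dots> = e" using 1[OF eS] idem_sq[OF r(3)] by simp
  finally have fge: "f (g e) = e" .
  have "f e = e" using ffa[of "g e"] fge r(2) eS by simp
  show ?thesis
  proof
    fix a show "f a = restrict (m e) S a"
    proof (cases "a \<in> S")
      case True
      have "f a = m (f e) (f a)" using is_idD(2)[OF r(7)] True by simp
      also have "\<dots> = m e a" using \<open>f e = e\<close> 1[OF True] by simp
      finally show ?thesis using True by simp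
    next
      case False thus ?thesis using endo_ext[OF r(1) False] by simp
    qed
  qed
qed

lemma restrict_comm: assumes "e \<in> idems S m" "e' \<in> idems S m"
  shows "compose S (restrict (m e) S) (restrict (m e') S) = compose S (restrict (m e') S) (restrict (m e) S)"
  using assms by (auto simp: compose_def restrict_def fun_eq_iff idem_comm2)

end

lemma inv_unique_abs:
  assumes sg: "semigrp T mul"
    and comm: "\<And>x y. x \<in> T \<Longrightarrow> y \<in> T \<Longrightarrow> mul x x = x \<Longrightarrow> mul y y = y \<Longrightarrow> mul x y = mul y x"
    and T: "a \<in> T" "b \<in> T" "c \<in> T"
    and b: "mul (mul a b) a = a" "mul (mul b a) b = b"
    and c: "mul (mul a c) a = a" "mul (mul c a) c = c"
  shows "b = c"
proof -
  have cl: "\<And>x y. x \<in> T \<Longrightarrow> y \<in> T \<Longrightarrow> mul x y \<in> T"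
   and as: "\<And>x y z. x \<in> T \<Longrightarrow> y \<in> T \<Longrightarrow> z \<in> T \<Longrightarrow> mul (mul x y) z = mul x (mul y z)"
    using sg unfolding semigrp_def by blast+
  have idm: "mul (mul x y) (mul x y) = mul x y" if "x \<in> T" "y \<in> T" "mul (mul x y) x = x" for x y
    using that as cl by metis
  have ba: "mul (mul b a) (mul b a) = mul b a" using idm[OF T(2) T(1) b(2)] .
  have ca: "mul (mul c a) (mul c a) = mul c a" using idm[OF T(3) T(1) c(2)] .
  have ab: "mul (mul a b) (mul a b) = mul a b" using idm[OF T(1) T(2) b(1)] .
  have ac: "mul (mul a c) (mul a c) = mul a c" using idm[OF T(1) T(3) c(1)] .
  have "b = mul (mul b a) b" using b(2) by simp
  also have "\<dots> = mul (mul b (mul (mul a c) a)) b" using c(1) by simp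
  also have "\<dots> = mul (mul (mul b a) (mul c a)) b" using as cl T by metis
  also have "\<dots> = mul (mul (mul c a) (mul b a)) b" using comm[OF cl[OF T(2) T(1)] cl[OF T(3) T(1)] ba ca] by simp
  also have "\<dots> = mul (mul c a) (mul (mul b a) b)" using as cl T by metis
  also have "\<dots> = mul (mul c a) b" using b(2) by simp
  finally have 1: "b = mul (mul c a) b" .
  have "c = mul (mul c a) c" using c(2) by simp
  also have "\<dots> = mul c (mul (mul (mul a b) a) c)" using as cl T b(1) by metis
  also have "\<dots> = mul c (mul (mul a b) (mul a c))" using as cl T by metis
  also have "\<dots> = mul c (mul (mul a c) (mul a b))" using comm[OF cl[OF T(1) T(2)] cl[OF T(1) T(3)] ab ac] by simp
  also have "\<dots> = mul (mul (mul c a) c) (mul a b)" using as cl T by metis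
  also have "\<dots> = mul (mul c a) b" using c(2) as cl T by metis
  finally have "c = mul (mul c a) b" .
  with 1 show ?thesis by simp
qed


context slg begin

definition eof where "eof f = (SOME e. \<exists>g. RI f g e)"
definition H where "H f = (\<lambda>x. if x \<in> unital_ideal S m (eof f) then Some (f x) else None)"

lemma eof: "RI f g e \<Longrightarrow> eof f = e"
  unfolding eof_def by (rule some_equality) (auto intro: RI_unique)

lemma ui_mem: "u \<in> idems S m \<Longrightarrow> x \<in> unital_ideal S m u \<longleftrightarrow> x \<in> S \<and> m u x = x"
  unfolding unital_ideal_def by (auto intro!: image_eqI[where x=x])

lemma ui_eq: assumes "u \<in> idems S m" "v \<in> idems S m" "unital_ideal S m u = unital_ideal S m v"
  shows "u = v"
proof -
  have "u \<in> unital_ideal S m u" using ui_mem[OF assms(1)] assms(1) by simp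
  hence 1: "m v u = u" using ui_mem[OF assms(2)] assms(3) by simp
  have "v \<in> unital_ideal S m v" using ui_mem[OF assms(2)] assms(2) by simp
  hence "m u v = v" using ui_mem[OF assms(1)] assms(3) by simp
  with 1 show ?thesis using idem_comm[OF assms(1,2)] by simp
qed

lemma H_Iui: assumes A: "RI f g e" shows "H f \<in> Iui S m"
proof -
  note r = RID[OF A]
  have fe: "f e \<in> idems S m" using endo_idem[OF r(1) r(3)] .
  have Hf: "H f = (\<lambda>x. if x \<in> unital_ideal S m e then Some (f x) else None)"
    unfolding H_def eof[OF A] ..
  have dom: "dom (H f) = unital_ideal S m e" unfolding Hf dom_def by simp
  have ranf: "ran (H f) = f ` unital_ideal S m e" unfolding Hf ran_def by (auto split: if_splits)
  have ran: "ran (H f) = unital_ideal S m (f e)"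
  proof
    show "ran (H f) \<subseteq> unital_ideal S m (f e)"
    proof
      fix y assume "y \<in> ran (H f)"
      then obtain x where x: "x \<in> unital_ideal S m e" and y: "y = f x" using ranf by auto
      have xS: "x \<in> S" and ex: "m e x = x" using x ui_mem[OF r(3)] by auto
      have "m (f e) y = f (m e x)" using y endo_mult[OF r(1) idemS[OF r(3)] xS] by simp
      thus "y \<in> unital_ideal S m (f e)" using ui_mem[OF fe] ex y xS r(1) by simp
    qed
    show "unital_ideal S m (f e) \<subseteq> ran (H f)"
    proof
      fix y assume "y \<in> unital_ideal S m (f e)"
      hence yS: "y \<in> S" and fy: "m (f e) y = y" using ui_mem[OF fe] by auto
      have gy: "g y \<in> S" using r(2) yS by simp
      have "m e (g y) = g y" using is_idD(2)[OF r(6)] yS by simp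
      hence "g y \<in> unital_ideal S m e" using ui_mem[OF r(3)] gy by simp
      moreover have "f (g y) = y" using r(5)[OF yS] fy by simp
      ultimately show "y \<in> ran (H f)" unfolding ranf by (metis image_eqI)
    qed
  qed
  have inj: "inj_on (H f) (dom (H f))"
  proof (rule inj_onI)
    fix x y assume x: "x \<in> dom (H f)" and y: "y \<in> dom (H f)" and eq: "H f x = H f y"
    have xS: "x \<in> S" "m e x = x" using x dom ui_mem[OF r(3)] by auto
    have yS: "y \<in> S" "m e y = y" using y dom ui_mem[OF r(3)] by auto
    have "f x = f y" using eq x y dom unfolding Hf by simp
    hence "g (f x) = g (f y)" by simp
    thus "x = y" using r(4)[OF xS(1)] r(4)[OF yS(1)] xS yS by simp
  qed
  have mult: "\<forall>x\<in>dom (H f). \<forall>y\<in>dom (H f). H f (m x y) = Some (m (the (H f x)) (the (H f y)))"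
  proof (intro ballI)
    fix x y assume x: "x \<in> dom (H f)" and y: "y \<in> dom (H f)"
    have xS: "x \<in> S" "m e x = x" using x dom ui_mem[OF r(3)] by auto
    have yS: "y \<in> S" "m e y = y" using y dom ui_mem[OF r(3)] by auto
    have "m e (m x y) = m (m e x) y" by (rule assoc[OF idemS[OF r(3)] xS(1) yS(1), symmetric])
    hence "m e (m x y) = m x y" using xS by simp
    hence "m x y \<in> unital_ideal S m e" using ui_mem[OF r(3)] xS yS by simp
    thus "H f (m x y) = Some (m (the (H f x)) (the (H f y)))"
      using x y dom endo_mult[OF r(1) xS(1) yS(1)] unfolding Hf by simp
  qed
  show ?thesis unfolding Iui_def using r(3) fe dom ran inj mult by blast
qed

lemma H_inj: assumes A: "RI f1 g1 e1" and B: "RI f2 g2 e2" and eq: "H f1 = H f2" shows "f1 = f2"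
proof -
  note a = RID[OF A] and b = RID[OF B]
  have Hf1: "H f1 = (\<lambda>x. if x \<in> unital_ideal S m e1 then Some (f1 x) else None)"
    unfolding H_def eof[OF A] ..
  have Hf2: "H f2 = (\<lambda>x. if x \<in> unital_ideal S m e2 then Some (f2 x) else None)"
    unfolding H_def eof[OF B] ..
  have "dom (H f1) = unital_ideal S m e1" "dom (H f2) = unital_ideal S m e2"
    unfolding Hf1 Hf2 dom_def by simp_all
  hence "e1 = e2" using ui_eq[OF a(3) b(3)] eq by simp
  show ?thesis
  proof
    fix x show "f1 x = f2 x"
    proof (cases "x \<in> S")
      case True
      have mem: "m e1 x \<in> unital_ideal S m e1" using ui_mem[OF a(3)] True a(3) by simp
      have "f1 x = f1 (m e1 x)" using RI_fe[OF A True] by simp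
      also have "\<dots> = f2 (m e1 x)" using fun_cong[OF eq, of "m e1 x"] mem \<open>e1 = e2\<close> unfolding Hf1 Hf2 by simp
      also have "\<dots> = f2 x" using RI_fe[OF B True] \<open>e1 = e2\<close> by simp
      finally show ?thesis .
    next
      case False thus ?thesis using endo_ext[OF a(1)] endo_ext[OF b(1)] by simp
    qed
  qed
qed


lemma idem_distrib: assumes e: "e \<in> idems S m" and a: "a \<in> S" and b: "b \<in> S"
  shows "m e (m a b) = m (m e a) (m e b)"
proof -
  have "m (m e a) (m e b) = m e (m a (m e b))" using e a b by simp
  also have "m a (m e b) = m (m a e) b" using e a b by simp
  also have "m a e = m e a" using central[OF e a] by simp
  also have "m (m e a) b = m e (m a b)" using e a b by simp
  also have "m e (m e (m a b)) = m e (m a b)" using e a b by simp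
  finally show ?thesis by simp
qed

lemma H_surj: assumes p: "p \<in> Iui S m" shows "\<exists>\<phi> g e. RI \<phi> g e \<and> H \<phi> = p"
proof -
  obtain e f where e: "e \<in> idems S m" and f: "f \<in> idems S m"
    and dom: "dom p = unital_ideal S m e" and ran: "ran p = unital_ideal S m f"
    and inj: "inj_on p (dom p)"
    and pm: "\<forall>x\<in>dom p. \<forall>y\<in>dom p. p (m x y) = Some (m (the (p x)) (the (p y)))"
    using p unfolding Iui_def by blast
  define eS where "eS = unital_ideal S m e"
  define fS where "fS = unital_ideal S m f"
  define q where "q x = the (p x)" for x
  have eSm: "x \<in> eS \<longleftrightarrow> x \<in> S \<and> m e x = x" for x unfolding eS_def using ui_mem[OF e] .
  have fSm: "x \<in> fS \<longleftrightarrow> x \<in> S \<and> m f x = x" for x unfolding fS_def using ui_mem[OF f] .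
  have eS_S: "x \<in> eS \<Longrightarrow> x \<in> S" for x using eSm by simp
  have fS_S: "x \<in> fS \<Longrightarrow> x \<in> S" for x using fSm by simp
  have pq: "x \<in> eS \<Longrightarrow> p x = Some (q x)" for x using dom unfolding eS_def q_def by (metis domIff option.collapse)
  have pN: "x \<notin> eS \<Longrightarrow> p x = None" for x using dom unfolding eS_def by (metis domIff)
  have qimg: "q ` eS = fS"
  proof
    show "q ` eS \<subseteq> fS" using pq ran unfolding fS_def ran_def by auto
    show "fS \<subseteq> q ` eS"
    proof
      fix y assume "y \<in> fS"
      then obtain x where "p x = Some y" using ran unfolding fS_def ran_def by auto
      moreover hence "x \<in> eS" using dom unfolding eS_def by auto
      ultimately show "y \<in> q ` eS" using pq by force
    qed
  qed
  have qf: "x \<in> eS \<Longrightarrow> q x \<in> fS" for x using qimg by auto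
  have qinj: "inj_on q eS"
  proof (rule inj_onI)
    fix x y assume "x \<in> eS" "y \<in> eS" "q x = q y"
    hence "p x = p y" "x \<in> dom p" "y \<in> dom p" using pq dom unfolding eS_def by auto
    thus "x = y" using inj by (auto dest: inj_onD)
  qed
  have qm: "x \<in> eS \<Longrightarrow> y \<in> eS \<Longrightarrow> q (m x y) = m (q x) (q y)" for x y
    using pm dom unfolding eS_def q_def by simp
  have emem: "a \<in> S \<Longrightarrow> m e a \<in> eS" for a using eSm e by simp
  have fmem: "a \<in> S \<Longrightarrow> m f a \<in> fS" for a using fSm f by simp
  have eeS: "e \<in> eS" using eSm e by simp
  have ffS: "f \<in> fS" using fSm f by simp
  have qe: "q e = f"
  proof -
    have left: "m (q e) y = y" if y: "y \<in> fS" for y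
    proof -
      obtain x where x: "x \<in> eS" and yx: "y = q x" using y qimg by auto
      have "m (q e) y = q (m e x)" using qm[OF eeS x] yx by simp
      thus ?thesis using eSm x yx by simp
    qed
    have "m (q e) f = f" using left[OF ffS] .
    moreover have "m f (q e) = q e" using qf[OF eeS] fSm by simp
    moreover have "m (q e) f = m f (q e)" using central[OF f fS_S[OF qf[OF eeS]]] by simp
    ultimately show ?thesis by simp
  qed
  define r where "r = inv_into eS q"
  have rq: "x \<in> eS \<Longrightarrow> r (q x) = x" for x unfolding r_def using qinj by (simp add: inv_into_f_f)
  have qr: "y \<in> fS \<Longrightarrow> q (r y) = y" for y unfolding r_def using qimg by (simp add: f_inv_into_f)
  have re: "y \<in> fS \<Longrightarrow> r y \<in> eS" for y unfolding r_def using qimg by (metis inv_into_into)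
  have rm: "y1 \<in> fS \<Longrightarrow> y2 \<in> fS \<Longrightarrow> r (m y1 y2) = m (r y1) (r y2)" for y1 y2
  proof -
    assume y: "y1 \<in> fS" "y2 \<in> fS"
    have "q (m (r y1) (r y2)) = m y1 y2" using qm[OF re[OF y(1)] re[OF y(2)]] qr y by simp
    moreover have "m (r y1) (r y2) \<in> eS"
    proof -
      have "m e (m (r y1) (r y2)) = m (m e (r y1)) (r y2)"
        by (rule assoc[OF idemS[OF e] eS_S[OF re[OF y(1)]] eS_S[OF re[OF y(2)]], symmetric])
      thus ?thesis using eSm re y by simp
    qed
    ultimately show ?thesis using rq by metis
  qed
  define \<phi> where "\<phi> = restrict (\<lambda>a. q (m e a)) S"
  define \<psi> where "\<psi> = restrict (\<lambda>a. r (m f a)) S"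
  have \<phi>a: "a \<in> S \<Longrightarrow> \<phi> a = q (m e a)" for a unfolding \<phi>_def by simp
  have \<psi>a: "a \<in> S \<Longrightarrow> \<psi> a = r (m f a)" for a unfolding \<psi>_def by simp
  have \<phi>end: "\<phi> \<in> endos S m"
  proof -
    have "\<phi> \<in> S \<rightarrow>\<^sub>E S" unfolding \<phi>_def using fS_S[OF qf[OF emem]] by (simp add: restrict_PiE_iff)
    moreover have "\<phi> (m a b) = m (\<phi> a) (\<phi> b)" if "a \<in> S" "b \<in> S" for a b
      using that \<phi>a idem_distrib[OF e] qm[OF emem emem] by simp
    ultimately show ?thesis unfolding endos_def by blast
  qed
  have \<psi>end: "\<psi> \<in> endos S m"
  proof -
    have "\<psi> \<in> S \<rightarrow>\<^sub>E S" unfolding \<psi>_def using eS_S[OF re[OF fmem]] by (simp add: restrict_PiE_iff)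
    moreover have "\<psi> (m a b) = m (\<psi> a) (\<psi> b)" if "a \<in> S" "b \<in> S" for a b
      using that \<psi>a idem_distrib[OF f] rm[OF fmem fmem] by simp
    ultimately show ?thesis unfolding endos_def by blast
  qed
  have \<phi>e: "\<phi> e = f" using \<phi>a[OF idemS[OF e]] qe e by simp
  have c1: "\<psi> (\<phi> a) = m e a" if a: "a \<in> S" for a
  proof -
    have "\<phi> a \<in> fS" using \<phi>a[OF a] qf[OF emem[OF a]] by simp
    hence "m f (\<phi> a) = \<phi> a" using fSm by simp
    thus ?thesis using \<psi>a \<phi>a a rq[OF emem[OF a]] fS_S \<open>\<phi> a \<in> fS\<close> by simp
  qed
  have c2: "\<phi> (\<psi> a) = m (\<phi> e) a" if a: "a \<in> S" for a
  proof -
    have "\<psi> a \<in> eS" using \<psi>a[OF a] re[OF fmem[OF a]] by simp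
    hence "m e (\<psi> a) = \<psi> a" using eSm by simp
    thus ?thesis using \<psi>a \<phi>a a qr[OF fmem[OF a]] eS_S \<open>\<psi> a \<in> eS\<close> \<phi>e by simp
  qed
  have c3: "is_identity_of m e (\<psi> ` S)"
  proof -
    have "\<psi> f = e" using \<psi>a[OF idemS[OF f]] f rq[OF eeS] qe by simp
    hence "e \<in> \<psi> ` S" using f by (metis idemS image_eqI)
    moreover have "m e t = t \<and> m t e = t" if t: "t \<in> \<psi> ` S" for t
    proof -
      have "t \<in> eS" using t \<psi>a re fmem by auto
      thus ?thesis using eSm central[OF e] by metis
    qed
    ultimately show ?thesis unfolding is_identity_of_def by blast
  qed
  have c4: "is_identity_of m (\<phi> e) (\<phi> ` S)"
  proof -
    have "\<phi> e \<in> \<phi> ` S" using e by simp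
    moreover have "m f t = t \<and> m t f = t" if t: "t \<in> \<phi> ` S" for t
    proof -
      have "t \<in> fS" using t \<phi>a qf emem by auto
      thus ?thesis using fSm central[OF f] by metis
    qed
    ultimately show ?thesis unfolding is_identity_of_def \<phi>e by blast
  qed
  have RIp: "RI \<phi> \<psi> e" unfolding RI_def using \<phi>end \<psi>end e c1 c2 c3 c4 by blast
  have "H \<phi> = p"
  proof
    fix x
    show "H \<phi> x = p x"
    proof (cases "x \<in> eS")
      case True
      hence "\<phi> x = q x" using \<phi>a eSm by simp
      thus ?thesis using True pq unfolding H_def eof[OF RIp] eS_def by simp
    next
      case False
      thus ?thesis using pN unfolding H_def eof[OF RIp] eS_def by simp
    qed
  qed
  with RIp show ?thesis by blast
qed


lemma H_hom: assumes A: "RI f1 g1 e1" and B: "RI f2 g2 e2"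
  shows "H (compose S f1 f2) = H f1 \<circ>\<^sub>m H f2"
proof -
  note a = RID[OF A] and b = RID[OF B]
  define E where "E = m (g2 e1) e2"
  have C: "RI (compose S f1 f2) (compose S g2 g1) E" unfolding E_def by (rule RI_comp[OF A B])
  have e1S: "e1 \<in> S" and e2S: "e2 \<in> S" using a(3) b(3) by auto
  have g2e1: "g2 e1 \<in> idems S m" using endo_idem[OF b(2) a(3)] .
  have f2e2: "f2 e2 \<in> idems S m" using endo_idem[OF b(1) b(3)] .
  have Eid: "E \<in> idems S m" unfolding E_def using idems_mult[OF g2e1 b(3)] .
  have key: "(x \<in> S \<and> m E x = x) \<longleftrightarrow> (x \<in> S \<and> m e2 x = x \<and> m e1 (f2 x) = f2 x)" for x
  proof (cases "x \<in> S")
    case xS: True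
    have f2x: "f2 x \<in> S" using b(1) xS by simp
    show ?thesis
    proof
      assume h: "x \<in> S \<and> m E x = x"
      have "m e2 x = m e2 (m (g2 e1) (m e2 x))" using h g2e1 b(3) xS unfolding E_def by simp
      also have "\<dots> = m (g2 e1) (m e2 (m e2 x))" using idem_comm2[OF b(3) g2e1] b(3) xS by simp
      also have "\<dots> = m E x" unfolding E_def using g2e1 b(3) xS by simp
      finally have 1: "m e2 x = x" using h by simp
      have "f2 x = f2 (m (g2 e1) (m e2 x))" using h g2e1 b(3) xS unfolding E_def by simp
      also have "\<dots> = m (f2 (g2 e1)) (f2 x)" using endo_mult[OF b(1) idemS[OF g2e1], of "m e2 x"] 1 xS by simp
      also have "f2 (g2 e1) = m (f2 e2) e1" using b(5)[OF e1S] .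
      finally have 2: "f2 x = m (m (f2 e2) e1) (f2 x)" .
      have "m e1 (f2 x) = m e1 (m (f2 e2) (m e1 (f2 x)))" using 2 f2e2 e1S f2x by (metis assoc idemS)
      also have "\<dots> = m (f2 e2) (m e1 (m e1 (f2 x)))" using idem_comm2[OF a(3) f2e2] f2x e1S by simp
      also have "\<dots> = m (f2 e2) (m e1 (f2 x))" using a(3) f2x by simp
      also have "\<dots> = f2 x" using 2 f2e2 e1S f2x by (metis assoc idemS)
      finally show "x \<in> S \<and> m e2 x = x \<and> m e1 (f2 x) = f2 x" using 1 xS by simp
    next
      assume h: "x \<in> S \<and> m e2 x = x \<and> m e1 (f2 x) = f2 x"
      have "x = g2 (f2 x)" using b(4)[OF xS] h by simp
      also have "\<dots> = g2 (m e1 (f2 x))" using h by simp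
      also have "\<dots> = m (g2 e1) (g2 (f2 x))" using endo_mult[OF b(2) e1S f2x] .
      also have "g2 (f2 x) = x" using b(4)[OF xS] h by simp
      finally have 1: "x = m (g2 e1) x" .
      have "m E x = m (g2 e1) (m e2 x)" unfolding E_def using g2e1 b(3) xS by simp
      also have "\<dots> = x" using h 1 by simp
      finally show "x \<in> S \<and> m E x = x" using xS by simp
    qed
  next
    case False thus ?thesis by simp
  qed
  show ?thesis
  proof
    fix x
    have L: "H (compose S f1 f2) x = (if x \<in> S \<and> m E x = x then Some (f1 (f2 x)) else None)"
      unfolding H_def eof[OF C] ui_mem[OF Eid] by (auto simp: compose_eq)
    have R: "(H f1 \<circ>\<^sub>m H f2) x = (if x \<in> S \<and> m e2 x = x \<and> m e1 (f2 x) = f2 x then Some (f1 (f2 x)) else None)"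
      unfolding H_def eof[OF A] eof[OF B] map_comp_def ui_mem[OF a(3)] ui_mem[OF b(3)]
      using b(1) by auto
    show "H (compose S f1 f2) x = (H f1 \<circ>\<^sub>m H f2) x" unfolding L R using key[of x] by simp
  qed
qed

end


theorem proposition3p4:
  fixes S :: "'a set" and m :: "'a \<Rightarrow> 'a \<Rightarrow> 'a"
  assumes "semilattice_of_groups S m"
  shows "iend S m \<subseteq> endos S m
    \<and> (\<forall>f\<in>iend S m. \<forall>g\<in>iend S m. compose S f g \<in> iend S m)
    \<and> inverse_semigrp (iend S m) (compose S)
    \<and> (\<exists>h. bij_betw h (iend S m) (Iui S m) \<and>
           (\<forall>f\<in>iend S m. \<forall>g\<in>iend S m. h (compose S f g) = h f \<circ>\<^sub>m h g))"
proof -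
  interpret slg S m using assms by (rule slg.intro)
  have iRI: "f \<in> iend S m \<longleftrightarrow> (\<exists>g e. RI f g e)" for f unfolding iend_def using rel_inv_RI by simp
  have P1: "iend S m \<subseteq> endos S m" unfolding iend_def rel_invertible_def by blast
  have P2: "\<forall>f\<in>iend S m. \<forall>g\<in>iend S m. compose S f g \<in> iend S m"
    using RI_comp iRI by meson
  have Pi: "f \<in> iend S m \<Longrightarrow> f \<in> S \<rightarrow> S" for f using P1 by (auto intro!: Pi_I)
  have sg: "semigrp (iend S m) (compose S)"
    unfolding semigrp_def using P2 compose_assoc Pi by metis
  have comm: "compose S x y = compose S y x" if x: "x \<in> iend S m" and y: "y \<in> iend S m"
    and xx: "compose S x x = x" and yy: "compose S y y = y" for x y
  proof -
    obtain g e where A: "RI x g e" using x iRI by blast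
    obtain g' e' where B: "RI y g' e'" using y iRI by blast
    show ?thesis using RI_idem[OF A xx] RI_idem[OF B yy] restrict_comm RID(3)[OF A] RID(3)[OF B] by metis
  qed
  have P3: "inverse_semigrp (iend S m) (compose S)"
    unfolding inverse_semigrp_def
  proof (intro conjI sg ballI)
    fix a assume a: "a \<in> iend S m"
    then obtain g e where A: "RI a g e" using iRI by blast
    have g: "g \<in> iend S m" using RI_sym[OF A] iRI by blast
    have 1: "compose S (compose S a g) a = a" using RI_self[OF A] .
    have 2: "compose S (compose S g a) g = g" using RI_self[OF RI_sym[OF A]] .
    show "\<exists>!b. b \<in> iend S m \<and> compose S (compose S a b) a = a \<and> compose S (compose S b a) b = b"
    proof (rule ex1I[of _ g])
      show "g \<in> iend S m \<and> compose S (compose S a g) a = a \<and> compose S (compose S g a) g = g"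
        using g 1 2 by blast
      fix b assume "b \<in> iend S m \<and> compose S (compose S a b) a = a \<and> compose S (compose S b a) b = b"
      thus "b = g" using inv_unique_abs[OF sg comm a _ g _ _ 1 2] by blast
    qed
  qed
  have P4: "bij_betw H (iend S m) (Iui S m)"
    unfolding bij_betw_def
  proof
    show "inj_on H (iend S m)" using H_inj iRI by (meson inj_onI)
    show "H ` iend S m = Iui S m"
    proof
      show "H ` iend S m \<subseteq> Iui S m" using H_Iui iRI by blast
      show "Iui S m \<subseteq> H ` iend S m"
      proof
        fix p assume "p \<in> Iui S m"
        then obtain \<phi> g e where "RI \<phi> g e" "H \<phi> = p" using H_surj by blast
        thus "p \<in> H ` iend S m" using iRI by blast
      qed
    qed
  qed
  have P5: "\<forall>f\<in>iend S m. \<forall>g\<in>iend S m. H (compose S f g) = H f \<circ>\<^sub>m H g"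
    using H_hom iRI by blast
  show ?thesis using P1 P2 P3 P4 P5 by blast
qed

end
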